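(* Let $(\mathcal{A},\mu,\alpha)$ be a Hom-Malcev-admissible superalgebra. Then for each $n\geq 0$ the $n$th derived Hom-superalgebra $\mathcal{A}^{n}=(\mathcal{A},\mu^{(n)}=\alpha^{2^{n}-1}\circ\mu,\alpha^{2^{n}})$ is also a Hom-Malcev-admissible superalgebra.
   Context: $\mathcal{A}=\mathcal{A}_0\oplus\mathcal{A}_1$ is a $\mathbb{Z}_2$-graded vector space over an algebraically closed field $\mathbb{K}$ of characteristic $0$; $|x|$ is the parity of homogeneous $x$; even maps preserve parity. A Hom-superalgebra is a triple $(\mathcal{A},\mu,\alpha)$ with $\mu$ even bilinear, $\alpha$ even linear and $\alpha\circ\mu=\mu\circ(\alpha\otimes\alpha)$. Its super-commutator Hom-superalgebra is $\mathcal{A}^-=(\mathcal{A},[-,-],\alpha)$ with $[x,y]=\mu(x,y)-(-1)^{|x||y|}\mu(y,x)$. For a bracket, $\widetilde{J}(x,y,z)=[[x,y],\alpha(z)]-[\alpha(x),[y,z]]-(-1)^{|y||z|}[[x,z],\alpha(y)]$. A Hom-Malcev superalgebra is a Hom-superalgebra $(\mathcal{A},[-,-],\alpha)$ with $[x,y]=-(-1)^{|x||y|}[y,x]$ and, for all homogeneous $x,y,z,t$, $2[\alpha^{2}(t),\widetilde{J}(x,y,z)]=\widetilde{J}(\alpha(t),\alpha(x),[y,z])+(-1)^{|x|(|y|+|z|)}\widetilde{J}(\alpha(t),\alpha(y),[z,x])+(-1)^{|z|(|x|+|y|)}\widetilde{J}(\alpha(t),\alpha(z),[x,y])$. A Hom-superalgebra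 is Hom-Malcev-admissible if $\mathcal{A}^-$ is a Hom-Malcev superalgebra. *)

theory Defs
  imports Main "HOL-Computational_Algebra.Polynomial"
begin

text \<open>The ground field: algebraically closed (every nonconstant polynomial has a root);
  characteristic 0 is imposed via the type class field_char_0.\<close>
definition alg_closed_field :: "'k::field itself \<Rightarrow> bool" where
  "alg_closed_field _ \<longleftrightarrow> (\<forall>p::'k poly. degree p > 0 \<longrightarrow> (\<exists>x. poly p x = 0))"

definition graded_vs :: "('k::field \<Rightarrow> 'v::ab_group_add \<Rightarrow> 'v) \<Rightarrow> 'v set \<Rightarrow> 'v set \<Rightarrow> bool" where
  "graded_vs sc A0 A1 \<longleftrightarrow> vector_space sc \<and> module.subspace sc A0 \<and> module.subspace sc A1 \<and>
     (\<forall>v. \<exists>!ab. fst ab \<in> A0 \<and> snd ab \<in> A1 \<and> v = fst ab + snd ab)"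

definition hc :: "'v set \<Rightarrow> 'v set \<Rightarrow> nat \<Rightarrow> 'v set" where
  "hc A0 A1 p = (if p mod 2 = 0 then A0 else A1)"

definition sgn_sc :: "('k::field \<Rightarrow> 'v \<Rightarrow> 'v) \<Rightarrow> nat \<Rightarrow> 'v \<Rightarrow> 'v" where
  "sgn_sc sc n v = sc ((-1) ^ n) v"

definition even_map :: "'v set \<Rightarrow> 'v set \<Rightarrow> ('v \<Rightarrow> 'v) \<Rightarrow> bool" where
  "even_map A0 A1 f \<longleftrightarrow> (\<forall>p\<in>{0,1}. \<forall>x\<in>hc A0 A1 p. f x \<in> hc A0 A1 p)"

definition even_bilinear ::
  "('k::field \<Rightarrow> 'v::ab_group_add \<Rightarrow> 'v) \<Rightarrow> 'v set \<Rightarrow> 'v set \<Rightarrow> ('v \<Rightarrow> 'v \<Rightarrow> 'v) \<Rightarrow> bool" where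
  "even_bilinear sc A0 A1 m \<longleftrightarrow>
     (\<forall>x. Vector_Spaces.linear sc sc (m x)) \<and> (\<forall>y. Vector_Spaces.linear sc sc (\<lambda>x. m x y)) \<and>
     (\<forall>p\<in>{0,1}. \<forall>q\<in>{0,1}. \<forall>x\<in>hc A0 A1 p. \<forall>y\<in>hc A0 A1 q. m x y \<in> hc A0 A1 (p + q))"

definition hom_superalgebra ::
  "('k::field \<Rightarrow> 'v::ab_group_add \<Rightarrow> 'v) \<Rightarrow> 'v set \<Rightarrow> 'v set \<Rightarrow> ('v \<Rightarrow> 'v \<Rightarrow> 'v) \<Rightarrow> ('v \<Rightarrow> 'v) \<Rightarrow> bool" where
  "hom_superalgebra sc A0 A1 m a \<longleftrightarrow>
     even_bilinear sc A0 A1 m \<and> Vector_Spaces.linear sc sc a \<and> even_map A0 A1 a \<and>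
     (\<forall>x y. a (m x y) = m (a x) (a y))"

definition super_comm ::
  "('k::field \<Rightarrow> 'v::ab_group_add \<Rightarrow> 'v) \<Rightarrow> ('v \<Rightarrow> 'v \<Rightarrow> 'v) \<Rightarrow> nat \<Rightarrow> nat \<Rightarrow> 'v \<Rightarrow> 'v \<Rightarrow> 'v" where
  "super_comm sc m p q x y = m x y - sgn_sc sc (p * q) (m y x)"

text \<open>J~(x,y,z) = [[x,y],a z] - [a x,[y,z]] - (-1)^(|y||z|) [[x,z],a y]; py, pz parities of y, z.\<close>
definition Jt ::
  "('k::field \<Rightarrow> 'v::ab_group_add \<Rightarrow> 'v) \<Rightarrow> ('v \<Rightarrow> 'v \<Rightarrow> 'v) \<Rightarrow> ('v \<Rightarrow> 'v) \<Rightarrow> nat \<Rightarrow> nat \<Rightarrow> 'v \<Rightarrow> 'v \<Rightarrow> 'v \<Rightarrow> 'v" where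
  "Jt sc b a py pz x y z = b (b x y) (a z) - b (a x) (b y z) - sgn_sc sc (py * pz) (b (b x z) (a y))"

definition hom_malcev_superalgebra ::
  "('k::field \<Rightarrow> 'v::ab_group_add \<Rightarrow> 'v) \<Rightarrow> 'v set \<Rightarrow> 'v set \<Rightarrow> ('v \<Rightarrow> 'v \<Rightarrow> 'v) \<Rightarrow> ('v \<Rightarrow> 'v) \<Rightarrow> bool" where
  "hom_malcev_superalgebra sc A0 A1 b a \<longleftrightarrow>
     hom_superalgebra sc A0 A1 b a \<and>
     (\<forall>p\<in>{0,1}. \<forall>q\<in>{0,1}. \<forall>x\<in>hc A0 A1 p. \<forall>y\<in>hc A0 A1 q.
         b x y = - sgn_sc sc (p * q) (b y x)) \<and>
     (\<forall>px\<in>{0,1}. \<forall>py\<in>{0,1}. \<forall>pz\<in>{0,1}. \<forall>pt\<in>{0,1}.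
       \<forall>x\<in>hc A0 A1 px. \<forall>y\<in>hc A0 A1 py. \<forall>z\<in>hc A0 A1 pz. \<forall>t\<in>hc A0 A1 pt.
         sc 2 (b (a (a t)) (Jt sc b a py pz x y z)) =
           Jt sc b a px (py + pz) (a t) (a x) (b y z)
         + sgn_sc sc (px * (py + pz)) (Jt sc b a py (pz + px) (a t) (a y) (b z x))
         + sgn_sc sc (pz * (px + py)) (Jt sc b a pz (px + py) (a t) (a z) (b x y)))"

definition comp :: "'v::ab_group_add set \<Rightarrow> 'v set \<Rightarrow> nat \<Rightarrow> 'v \<Rightarrow> 'v" where
  "comp A0 A1 p v = (let ab = (THE ab. fst ab \<in> A0 \<and> snd ab \<in> A1 \<and> v = fst ab + snd ab)
                      in if p mod 2 = 0 then fst ab else snd ab)"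

text \<open>The super-commutator bracket of A^-, extended bilinearly from homogeneous elements.\<close>
definition super_bracket ::
  "('k::field \<Rightarrow> 'v::ab_group_add \<Rightarrow> 'v) \<Rightarrow> 'v set \<Rightarrow> 'v set \<Rightarrow> ('v \<Rightarrow> 'v \<Rightarrow> 'v) \<Rightarrow> 'v \<Rightarrow> 'v \<Rightarrow> 'v" where
  "super_bracket sc A0 A1 m x y =
     (\<Sum>p\<in>{0,1::nat}. \<Sum>q\<in>{0,1::nat}. super_comm sc m p q (comp A0 A1 p x) (comp A0 A1 q y))"

definition hom_malcev_admissible ::
  "('k::field \<Rightarrow> 'v::ab_group_add \<Rightarrow> 'v) \<Rightarrow> 'v set \<Rightarrow> 'v set \<Rightarrow> ('v \<Rightarrow> 'v \<Rightarrow> 'v) \<Rightarrow> ('v \<Rightarrow> 'v) \<Rightarrow> bool" where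
  "hom_malcev_admissible sc A0 A1 m a \<longleftrightarrow>
     hom_superalgebra sc A0 A1 m a \<and>
     hom_malcev_superalgebra sc A0 A1 (super_bracket sc A0 A1 m) a"

end

theory Submission
  imports Defs
begin

lemma lin_add: "Vector_Spaces.linear sc sc f \<Longrightarrow> f (x + y) = f x + f y"
  by (simp add: Vector_Spaces.linear_iff)
lemma lin_scale: "Vector_Spaces.linear sc sc f \<Longrightarrow> f (sc c x) = sc c (f x)"
  by (simp add: Vector_Spaces.linear_iff)
lemma lin_diff:
  fixes f :: "'v::ab_group_add \<Rightarrow> 'v"
  shows "Vector_Spaces.linear sc sc f \<Longrightarrow> f (x - y) = f x - f y"
  by (metis add_diff_cancel lin_add diff_add_cancel eq_diff_eq)
lemma lin_neg:
  fixes f :: "'v::ab_group_add \<Rightarrow> 'v"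
  shows "Vector_Spaces.linear sc sc f \<Longrightarrow> f (- x) = - f x"
  by (metis diff_0 lin_diff diff_self)
lemma lin_sgn: "Vector_Spaces.linear sc sc f \<Longrightarrow> f (sgn_sc sc n x) = sgn_sc sc n (f x)"
  by (simp add: sgn_sc_def lin_scale)

lemma lin_pow:
  assumes "Vector_Spaces.linear sc sc a"
  shows "Vector_Spaces.linear sc sc (a ^^ j)"
proof -
  have vs: "vector_space sc" using assms by (simp add: Vector_Spaces.linear_iff)
  have "(\<forall>x y. (a^^j) (x + y) = (a^^j) x + (a^^j) y) \<and> (\<forall>c x. (a^^j) (sc c x) = sc c ((a^^j) x))"
    by (induction j) (auto simp: lin_add[OF assms] lin_scale[OF assms])
  thus ?thesis using vs by (simp add: Vector_Spaces.linear_iff)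
qed

lemma even_pow: "even_map A0 A1 a \<Longrightarrow> even_map A0 A1 (a ^^ j)"
  unfolding even_map_def by (induction j) auto

lemma mult_pow: "(\<forall>x y. a (m x y) = m (a x) (a y)) \<Longrightarrow> (a^^j) (m x y) = m ((a^^j) x) ((a^^j) y)"
  by (induction j) auto

lemma hom_super_derived:
  assumes "hom_superalgebra sc A0 A1 m a"
  shows "hom_superalgebra sc A0 A1 (\<lambda>x y. (a^^k) (m x y)) (a^^(k+1))"
proof -
  have la: "Vector_Spaces.linear sc sc a" and ea: "even_map A0 A1 a"
    and mm: "\<forall>x y. a (m x y) = m (a x) (a y)" and eb: "even_bilinear sc A0 A1 m"
    using assms by (auto simp: hom_superalgebra_def)
  have lk: "Vector_Spaces.linear sc sc (a^^k)" by (rule lin_pow[OF la])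
  have ek: "even_map A0 A1 (a^^k)" by (rule even_pow[OF ea])
  have "even_bilinear sc A0 A1 (\<lambda>x y. (a^^k) (m x y))"
    unfolding even_bilinear_def
  proof (intro conjI allI ballI)
    fix x
    show "Vector_Spaces.linear sc sc (\<lambda>y. (a^^k) (m x y))"
      using Vector_Spaces.linear_compose[of sc sc "m x" sc "a^^k"] eb lk
      by (auto simp: even_bilinear_def o_def)
  next
    fix y
    show "Vector_Spaces.linear sc sc (\<lambda>x. (a^^k) (m x y))"
      using Vector_Spaces.linear_compose[of sc sc "\<lambda>x. m x y" sc "a^^k"] eb lk
      by (auto simp: even_bilinear_def o_def)
  next
    fix p q x y assume "p \<in> {0,1::nat}" "q \<in> {0,1::nat}" "x \<in> hc A0 A1 p" "y \<in> hc A0 A1 q"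
    hence "m x y \<in> hc A0 A1 (p+q)" using eb by (auto simp: even_bilinear_def)
    thus "(a^^k) (m x y) \<in> hc A0 A1 (p+q)" using ek
      by (cases "(p+q) mod 2 = 0") (auto simp: even_map_def hc_def)
  qed
  moreover have "Vector_Spaces.linear sc sc (a^^(k+1))" by (rule lin_pow[OF la])
  moreover have "even_map A0 A1 (a^^(k+1))" by (rule even_pow[OF ea])
  moreover have "\<forall>x y. (a^^(k+1)) ((a^^k) (m x y)) = (a^^k) (m ((a^^(k+1)) x) ((a^^(k+1)) y))"
    by (simp only: mult_pow[OF mm] flip: funpow_swap1) (simp add: funpow_swap1)
  ultimately show ?thesis by (simp add: hom_superalgebra_def)
qed

lemma sb_derived:
  assumes lf: "Vector_Spaces.linear sc sc f"
  shows "super_bracket sc A0 A1 (\<lambda>x y. f (m x y)) x y = f (super_bracket sc A0 A1 m x y)"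
  by (simp add: super_bracket_def super_comm_def lin_add[OF lf] lin_diff[OF lf] lin_sgn[OF lf])

lemma Jt_comm:
  assumes lf: "Vector_Spaces.linear sc sc f" and fm: "\<And>x y. f (B x y) = B (f x) (f y)"
    and fa: "\<And>x. f (a x) = a (f x)"
  shows "f (Jt sc B a py pz x y z) = Jt sc B a py pz (f x) (f y) (f z)"
  by (simp add: Jt_def lin_diff[OF lf] lin_sgn[OF lf] fm fa)

lemma malcev_derived:
  assumes H: "hom_malcev_superalgebra sc A0 A1 B a"
  shows "hom_malcev_superalgebra sc A0 A1 (\<lambda>x y. (a^^k) (B x y)) (a^^(k+1))"
proof -
  note Hs = H[unfolded hom_malcev_superalgebra_def]
  have hs: "hom_superalgebra sc A0 A1 B a" by (rule conjunct1[OF Hs])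
  have la: "Vector_Spaces.linear sc sc a" and mm: "\<forall>x y. a (B x y) = B (a x) (a y)"
    using hs by (auto simp: hom_superalgebra_def)
  have lp: "\<And>j. Vector_Spaces.linear sc sc (a^^j)" by (rule lin_pow[OF la])
  have r1: "\<And>j x y. (a^^j) (B x y) = B ((a^^j) x) ((a^^j) y)" by (rule mult_pow[OF mm])
  have r4: "\<And>i j x. (a^^i) ((a^^j) x) = (a^^(i+j)) x" by (simp add: funpow_add)
  have r5: "\<And>j x. (a^^j) (a x) = a ((a^^j) x)" by (simp add: funpow_swap1)
  have r6: "\<And>x. (a^^(k+1)) x = (a^^k) (a x)" by (simp add: funpow_swap1)
  have JC: "\<And>j py pz x y z. (a^^j) (Jt sc B a py pz x y z) = Jt sc B a py pz ((a^^j) x) ((a^^j) y) ((a^^j) z)"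
    by (intro Jt_comm lp r1 r5)
  have JD: "\<And>py pz x y z. Jt sc (\<lambda>x y. (a^^k) (B x y)) (a^^(k+1)) py pz x y z
      = (a^^(k+k)) (Jt sc B a py pz x y z)"
    unfolding JC by (simp only: Jt_def r6 r1 r4 r5)
  have skew: "\<forall>p\<in>{0,1}. \<forall>q\<in>{0,1}. \<forall>x\<in>hc A0 A1 p. \<forall>y\<in>hc A0 A1 q.
         B x y = - sgn_sc sc (p * q) (B y x)" by (rule conjunct1[OF conjunct2[OF Hs]])
  have ident: "\<forall>px\<in>{0,1}. \<forall>py\<in>{0,1}. \<forall>pz\<in>{0,1}. \<forall>pt\<in>{0,1}.
       \<forall>x\<in>hc A0 A1 px. \<forall>y\<in>hc A0 A1 py. \<forall>z\<in>hc A0 A1 pz. \<forall>t\<in>hc A0 A1 pt.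
         sc 2 (B (a (a t)) (Jt sc B a py pz x y z)) =
           Jt sc B a px (py + pz) (a t) (a x) (B y z)
         + sgn_sc sc (px * (py + pz)) (Jt sc B a py (pz + px) (a t) (a y) (B z x))
         + sgn_sc sc (pz * (px + py)) (Jt sc B a pz (px + py) (a t) (a z) (B x y))"
    by (rule conjunct2[OF conjunct2[OF Hs]])
  show ?thesis
    unfolding hom_malcev_superalgebra_def
  proof (intro conjI ballI)
    show "hom_superalgebra sc A0 A1 (\<lambda>x y. (a ^^ k) (B x y)) (a ^^ (k + 1))"
      by (rule hom_super_derived[OF hs])
  next
    fix p q x y assume "p \<in> {0,1::nat}" "q \<in> {0,1::nat}" "x \<in> hc A0 A1 p" "y \<in> hc A0 A1 q"
    hence "B x y = - sgn_sc sc (p * q) (B y x)" by (rule skew[rule_format])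
    thus "(a^^k) (B x y) = - sgn_sc sc (p * q) ((a^^k) (B y x))"
      by (simp add: lin_neg[OF lp] lin_sgn[OF lp])
  next
    fix px py pz pt x y z t
    assume ps: "px \<in> {0,1::nat}" "py \<in> {0,1::nat}" "pz \<in> {0,1::nat}" "pt \<in> {0,1::nat}"
      and xs: "x \<in> hc A0 A1 px" "y \<in> hc A0 A1 py" "z \<in> hc A0 A1 pz" "t \<in> hc A0 A1 pt"
    have e: "sc 2 (B (a (a t)) (Jt sc B a py pz x y z)) =
           Jt sc B a px (py + pz) (a t) (a x) (B y z)
         + sgn_sc sc (px * (py + pz)) (Jt sc B a py (pz + px) (a t) (a y) (B z x))
         + sgn_sc sc (pz * (px + py)) (Jt sc B a pz (px + py) (a t) (a z) (B x y))"
      by (rule ident[rule_format, OF ps xs])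
    define K where "K = k + k + k"
    have L: "sc 2 ((a ^^ k) (B ((a ^^ (k + 1)) ((a ^^ (k + 1)) t))
                 (Jt sc (\<lambda>x y. (a ^^ k) (B x y)) (a ^^ (k + 1)) py pz x y z)))
         = (a^^K) (sc 2 (B (a (a t)) (Jt sc B a py pz x y z)))"
    proof -
      have "(a ^^ (k + 1)) ((a ^^ (k + 1)) t) = (a^^(k+k)) (a (a t))"
        by (simp only: r6 r5) (simp only: r4)
      thus ?thesis unfolding JD K_def
        by (simp only: r1[symmetric] r4 add.assoc lin_scale[OF lp])
    qed
    have T: "\<And>pa pb u v w. Jt sc (\<lambda>x y. (a ^^ k) (B x y)) (a ^^ (k + 1)) pa pb ((a ^^ (k + 1)) u)
          ((a ^^ (k + 1)) v) ((a ^^ k) w) = (a^^K) (Jt sc B a pa pb (a u) (a v) w)"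
      unfolding JD K_def r6 JC[symmetric] by (simp only: r4 add.assoc)
    show "sc 2 ((a ^^ k) (B ((a ^^ (k + 1)) ((a ^^ (k + 1)) t))
                 (Jt sc (\<lambda>x y. (a ^^ k) (B x y)) (a ^^ (k + 1)) py pz x y z))) =
         Jt sc (\<lambda>x y. (a ^^ k) (B x y)) (a ^^ (k + 1)) px (py + pz) ((a ^^ (k + 1)) t)
          ((a ^^ (k + 1)) x) ((a ^^ k) (B y z)) +
         sgn_sc sc (px * (py + pz))
          (Jt sc (\<lambda>x y. (a ^^ k) (B x y)) (a ^^ (k + 1)) py (pz + px) ((a ^^ (k + 1)) t)
            ((a ^^ (k + 1)) y) ((a ^^ k) (B z x))) +
         sgn_sc sc (pz * (px + py))
          (Jt sc (\<lambda>x y. (a ^^ k) (B x y)) (a ^^ (k + 1)) pz (px + py) ((a ^^ (k + 1)) t)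
            ((a ^^ (k + 1)) z) ((a ^^ k) (B x y)))"
      unfolding L T e by (simp only: lin_add[OF lp] lin_sgn[OF lp])
  qed
qed

theorem mainTheorem6:
  fixes sc :: "'k::field_char_0 \<Rightarrow> 'v::ab_group_add \<Rightarrow> 'v"
    and A0 A1 :: "'v set"
    and mu :: "'v \<Rightarrow> 'v \<Rightarrow> 'v"
    and alpha :: "'v \<Rightarrow> 'v"
    and n :: nat
  assumes "alg_closed_field TYPE('k)"
    and "graded_vs sc A0 A1"
    and "hom_malcev_admissible sc A0 A1 mu alpha"
  shows "hom_malcev_admissible sc A0 A1
           (\<lambda>x y. (alpha ^^ (2 ^ n - 1)) (mu x y)) (alpha ^^ (2 ^ n))"
proof -
  define k where "k = (2::nat) ^ n - 1"
  have kk: "(2::nat) ^ n = k + 1" unfolding k_def by simp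
  have hs: "hom_superalgebra sc A0 A1 mu alpha"
    and hm: "hom_malcev_superalgebra sc A0 A1 (super_bracket sc A0 A1 mu) alpha"
    using assms(3) by (auto simp: hom_malcev_admissible_def)
  have la: "Vector_Spaces.linear sc sc alpha" using hs by (simp add: hom_superalgebra_def)
  have sb: "super_bracket sc A0 A1 (\<lambda>x y. (alpha^^k) (mu x y)) = (\<lambda>x y. (alpha^^k) (super_bracket sc A0 A1 mu x y))"
    by (intro ext sb_derived lin_pow[OF la])
  show ?thesis
    unfolding kk k_def[symmetric] diff_add_inverse2 hom_malcev_admissible_def sb
    using hom_super_derived[OF hs] malcev_derived[OF hm] by blast
qed

end
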